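(* Let $\mathrm{A}$ be a real symmetric positive definite $d\times d$ matrix which is admissible with some parameter $\tau>0$. Then for every $a=(a_n)_{n\in\mathbb{Z}^d}\in\ell^{2}(\mathbb{Z}^{d})$, \[ \sum_{\vec{n}=(n_{1},n_{2},n_{3},n)\in\Gamma_{0}}a_{n_{1}}\overline{a_{n_{2}}}a_{n_{3}}\overline{a_{n}}=2\Big(\sum_{n\in\mathbb{Z}^{d}}|a_{n}|^{2}\Big)^{2}-\sum_{n\in\mathbb{Z}^{d}}|a_{n}|^{4}, \] where $\Gamma_{0}=\{\vec n\in(\mathbb{Z}^{d})^{4}: n_{1}-n_{2}+n_{3}-n=0,\ \Omega(\vec n)=0\}$.
   Context: $\lambda_{n}^{2}=n^{\intercal}\mathrm{A}n$ for $n\in\mathbb{Z}^d$, $|n|$ Euclidean norm; $\Omega(\vec{n})=\lambda_{n_{1}}^{2}-\lambda_{n_{2}}^{2}+\lambda_{n_{3}}^{2}-\lambda_{n}^{2}$. $\mathrm{A}$ is admissible with parameter $\tau>0$ if there is $c>0$ such that $|a^{\intercal}\mathrm{A}b|\geq c|a|^{-\tau}|b|^{-\tau}$ for all $a,b\in\mathbb{Z}^{d}\setminus\{0\}$. *)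

theory Defs
  imports "HOL-Analysis.Analysis"
begin

definition rvec :: "int ^ 'd \<Rightarrow> real ^ 'd" where
  "rvec n = (\<chi> i. of_int (n $ i))"

definition lam2 :: "real ^ 'd ^ 'd \<Rightarrow> int ^ 'd \<Rightarrow> real" where
  "lam2 A n = rvec n \<bullet> (A *v rvec n)"

definition Omega :: "real ^ 'd ^ 'd \<Rightarrow> int ^ 'd \<Rightarrow> int ^ 'd \<Rightarrow> int ^ 'd \<Rightarrow> int ^ 'd \<Rightarrow> real" where
  "Omega A n1 n2 n3 n = lam2 A n1 - lam2 A n2 + lam2 A n3 - lam2 A n"

definition admissible :: "real ^ 'd ^ 'd \<Rightarrow> real \<Rightarrow> bool" where
  "admissible A \<tau> \<longleftrightarrow> (\<exists>c>0. \<forall>a b :: int ^ 'd. a \<noteq> 0 \<longrightarrow> b \<noteq> 0 \<longrightarrow>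
      \<bar>rvec a \<bullet> (A *v rvec b)\<bar> \<ge> c * norm (rvec a) powr (-\<tau>) * norm (rvec b) powr (-\<tau>))"

definition Gamma0 :: "real ^ 'd ^ 'd \<Rightarrow> ((int ^ 'd) \<times> (int ^ 'd) \<times> (int ^ 'd) \<times> (int ^ 'd)) set" where
  "Gamma0 A = {(n1, n2, n3, n). n1 - n2 + n3 - n = 0 \<and> Omega A n1 n2 n3 n = 0}"

end

theory Submission
  imports Defs
begin

lemma symA: fixes A :: "real^'d^'d" assumes "transpose A = A"
  shows "x \<bullet> (A *v y) = y \<bullet> (A *v x)"
proof -
  have s: "A $ i $ j = A $ j $ i" for i j using assms by (metis transpose_def vec_lambda_beta)
  have "x \<bullet> (A *v y) = (\<Sum>i\<in>UNIV. \<Sum>j\<in>UNIV. x$i * A$i$j * y$j)"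
    unfolding inner_vec_def matrix_vector_mult_def by (simp add: sum_distrib_left mult_ac)
  also have "\<dots> = (\<Sum>j\<in>UNIV. \<Sum>i\<in>UNIV. x$i * A$i$j * y$j)" by (rule sum.swap)
  also have "\<dots> = y \<bullet> (A *v x)"
    unfolding inner_vec_def matrix_vector_mult_def by (simp add: sum_distrib_left mult_ac s)
  finally show ?thesis .
qed

lemma rvec_add: "rvec (x + y) = rvec x + rvec y"
  by (simp add: rvec_def vec_eq_iff)

lemma rvec_diff: "rvec (x - y) = rvec x - rvec y"
  by (simp add: rvec_def vec_eq_iff)

lemma rvec_eq0: "rvec x = 0 \<longleftrightarrow> x = 0"
  by (simp add: rvec_def vec_eq_iff)

lemma Omega_formula:
  fixes A :: "real^'d^'d"
  assumes symm: "transpose A = A" and n: "n = n1 - n2 + n3"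
  shows "Omega A n1 n2 n3 n = -2 * (rvec (n1 - n2) \<bullet> (A *v rvec (n3 - n2)))"
proof -
  define u where "u = rvec (n1 - n2)"
  define v where "v = rvec (n3 - n2)"
  define w where "w = rvec n2"
  have 1: "rvec n1 = w + u" unfolding u_def w_def rvec_diff by simp
  have 3: "rvec n3 = w + v" unfolding v_def w_def rvec_diff by simp
  have 4: "rvec n = w + u + v" unfolding n u_def v_def w_def rvec_diff rvec_add by simp
  have s1: "v \<bullet> (A *v u) = u \<bullet> (A *v v)" by (rule symA[OF symm])
  have s2: "w \<bullet> (A *v u) = u \<bullet> (A *v w)" by (rule symA[OF symm])
  have s3: "w \<bullet> (A *v v) = v \<bullet> (A *v w)" by (rule symA[OF symm])
  show ?thesis
    unfolding Omega_def lam2_def 1 3 4 u_def[symmetric] v_def[symmetric] w_def[symmetric]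
    by (simp add: matrix_vector_right_distrib inner_add_left inner_add_right s1 s2 s3)
qed

lemma Gamma0_char:
  fixes A :: "real^'d^'d"
  assumes symm: "transpose A = A" and adm: "admissible A \<tau>"
  shows "(n1, n2, n3, n) \<in> Gamma0 A \<longleftrightarrow> n = n1 - n2 + n3 \<and> (n1 = n2 \<or> n3 = n2)"
proof
  assume h: "(n1, n2, n3, n) \<in> Gamma0 A"
  then have n: "n = n1 - n2 + n3" and om: "Omega A n1 n2 n3 n = 0"
    unfolding Gamma0_def by (auto simp: algebra_simps)
  show "n = n1 - n2 + n3 \<and> (n1 = n2 \<or> n3 = n2)"
  proof (rule ccontr)
    assume "\<not> ?thesis"
    with n have u: "n1 - n2 \<noteq> 0" and v: "n3 - n2 \<noteq> 0" by auto
    from adm obtain c where c: "c > 0" and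
      cb': "\<forall>a b :: int ^ 'd. a \<noteq> 0 \<longrightarrow> b \<noteq> 0 \<longrightarrow>
        \<bar>rvec a \<bullet> (A *v rvec b)\<bar> \<ge> c * norm (rvec a) powr (-\<tau>) * norm (rvec b) powr (-\<tau>)"
      unfolding admissible_def by (elim exE conjE) (rule that)
    have cb: "\<bar>rvec (n1 - n2) \<bullet> (A *v rvec (n3 - n2))\<bar> \<ge>
        c * norm (rvec (n1 - n2)) powr (-\<tau>) * norm (rvec (n3 - n2)) powr (-\<tau>)"
      by (rule cb'[rule_format, OF u v])
    have "rvec (n1 - n2) \<noteq> 0" "rvec (n3 - n2) \<noteq> 0"
      using u v rvec_eq0 by blast+
    then have "norm (rvec (n1 - n2)) \<noteq> 0" "norm (rvec (n3 - n2)) \<noteq> 0"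
      using norm_eq_zero by blast+
    then have "norm (rvec (n1 - n2)) powr (-\<tau>) > 0" "norm (rvec (n3 - n2)) powr (-\<tau>) > 0"
      using powr_gt_zero by blast+
    then have "c * norm (rvec (n1 - n2)) powr (-\<tau>) * norm (rvec (n3 - n2)) powr (-\<tau>) > 0"
      using c by (intro mult_pos_pos)
    with cb have "rvec (n1 - n2) \<bullet> (A *v rvec (n3 - n2)) \<noteq> 0" by linarith
    with Omega_formula[OF symm n] om show False by simp
  qed
next
  assume h: "n = n1 - n2 + n3 \<and> (n1 = n2 \<or> n3 = n2)"
  then have n: "n = n1 - n2 + n3" and "n1 - n2 = 0 \<or> n3 - n2 = 0"
    by auto
  then have "rvec (n1 - n2) = 0 \<or> rvec (n3 - n2) = 0"
    using rvec_eq0 by blast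
  then have "Omega A n1 n2 n3 n = 0"
    by (elim disjE; simp only: Omega_formula[OF symm n] inner_zero_left inner_zero_right
        matrix_vector_mult_0_right mult_zero_right minus_zero)
  with h show "(n1, n2, n3, n) \<in> Gamma0 A" unfolding Gamma0_def by auto
qed

theorem lemma2p6:
  fixes A :: "real ^ 'd ^ 'd" and \<tau> :: real and a :: "int ^ 'd \<Rightarrow> complex"
  assumes symm: "transpose A = A"
    and posdef: "\<forall>x :: real ^ 'd. x \<noteq> 0 \<longrightarrow> x \<bullet> (A *v x) > 0"
    and tau: "\<tau> > 0"
    and adm: "admissible A \<tau>"
    and l2: "(\<lambda>n. (norm (a n))\<^sup>2) summable_on UNIV"
  shows "((\<lambda>(n1, n2, n3, n). a n1 * cnj (a n2) * a n3 * cnj (a n)) has_sum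
           complex_of_real (2 * (\<Sum>\<^sub>\<infinity>n. (norm (a n))\<^sup>2)\<^sup>2 - (\<Sum>\<^sub>\<infinity>n. (norm (a n)) ^ 4)))
         (Gamma0 A)"
proof -
  define g where "g n = (norm (a n))\<^sup>2" for n
  define S where "S = (\<Sum>\<^sub>\<infinity>n. g n)"
  define T where "T = (\<Sum>\<^sub>\<infinity>n. (norm (a n)) ^ 4)"
  define F where "F = (\<lambda>(n1, n2, n3, n). a n1 * cnj (a n2) * a n3 * cnj (a n))"
  have g0: "g n \<ge> 0" for n unfolding g_def by simp
  have gS: "(g has_sum S) UNIV" unfolding S_def g_def using l2 by (rule has_sum_infsum)
  define P where "P = (\<lambda>(m::int^'d, k::int^'d). g m * g k)"
  have Psum: "P summable_on UNIV \<times> UNIV"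
    apply (rule summable_on_SigmaI[where g = "\<lambda>m. g m * S"])
      subgoal for x using has_sum_cmult_right[OF gS, of "g x"] by (simp add: P_def)
      subgoal using has_sum_cmult_left[OF gS, of S] unfolding summable_on_def by blast
      subgoal by (simp add: P_def g0)
    done
  have Phas: "(P has_sum (S * S)) (UNIV \<times> UNIV)"
    apply (rule has_sum_SigmaI[where g = "\<lambda>m. g m * S"])
    using has_sum_cmult_right[OF gS] has_sum_cmult_left[OF gS] Psum
    by (auto simp: P_def)
  have cP: "((\<lambda>x. complex_of_real (P x)) has_sum complex_of_real (S * S)) (UNIV \<times> UNIV)"
    by (rule has_sum_of_real[OF Phas])
  define h1 where "h1 = (\<lambda>(m::int^'d, k::int^'d). (m, m, k, k))"
  define h2 where "h2 = (\<lambda>(m::int^'d, k::int^'d). (m, k, k, m))"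
  define hd where "hd = (\<lambda>m::int^'d. (m, m, m, m))"
  have nsq: "x * cnj x = complex_of_real ((norm x)\<^sup>2)" for x :: complex
    by (rule complex_norm_square[symmetric])
  have nsq': "a m * cnj (a m) = complex_of_real (g m)" for m
    by (simp only: g_def complex_norm_square)
  have G1: "(F has_sum complex_of_real (S * S)) (h1 ` UNIV)"
  proof -
    have "inj_on h1 UNIV" unfolding h1_def inj_on_def by auto
    moreover have "F \<circ> h1 = (\<lambda>x. complex_of_real (P x))"
    proof
      fix x show "(F \<circ> h1) x = complex_of_real (P x)"
      proof (cases x)
        case (Pair m k)
        have "(F \<circ> h1) x = a m * cnj (a m) * (a k * cnj (a k))"
          by (simp add: F_def h1_def Pair mult_ac)
        then show ?thesis by (simp only: nsq' P_def Pair of_real_mult case_prod_conv)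
      qed
    qed
    ultimately show ?thesis using cP by (simp add: has_sum_reindex)
  qed
  have G2: "(F has_sum complex_of_real (S * S)) (h2 ` UNIV)"
  proof -
    have "inj_on h2 UNIV" unfolding h2_def inj_on_def by auto
    moreover have "F \<circ> h2 = (\<lambda>x. complex_of_real (P x))"
    proof
      fix x show "(F \<circ> h2) x = complex_of_real (P x)"
      proof (cases x)
        case (Pair m k)
        have "(F \<circ> h2) x = a m * cnj (a m) * (a k * cnj (a k))"
          by (simp add: F_def h2_def Pair mult_ac)
        then show ?thesis by (simp only: nsq' P_def Pair of_real_mult case_prod_conv)
      qed
    qed
    ultimately show ?thesis using cP by (simp add: has_sum_reindex)
  qed
  have Dsum: "(\<lambda>m. g m * g m) summable_on UNIV"
  proof -
    have "P summable_on (\<lambda>m. (m, m)) ` UNIV"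
      using Psum by (rule summable_on_subset_banach) auto
    moreover have "inj_on (\<lambda>m::int^'d. (m, m)) UNIV" by (auto simp: inj_on_def)
    ultimately show ?thesis by (simp add: summable_on_reindex o_def P_def)
  qed
  have g4: "g m * g m = (norm (a m)) ^ 4" for m unfolding g_def by algebra
  have Thas: "((\<lambda>m. g m * g m) has_sum T) UNIV"
    unfolding T_def g4 using Dsum unfolding g4 by (rule has_sum_infsum)
  have GD: "(F has_sum complex_of_real T) (hd ` UNIV)"
  proof -
    have "inj_on hd UNIV" unfolding hd_def inj_on_def by auto
    moreover have "F \<circ> hd = (\<lambda>m. complex_of_real (g m * g m))"
    proof
      fix m have "(F \<circ> hd) m = a m * cnj (a m) * (a m * cnj (a m))"
        by (simp add: F_def hd_def mult_ac)
      then show "(F \<circ> hd) m = complex_of_real (g m * g m)" by (simp only: nsq' of_real_mult)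
    qed
    ultimately show ?thesis using has_sum_of_real[OF Thas] by (simp add: has_sum_reindex)
  qed
  have G2D: "(F has_sum (complex_of_real (S * S) - complex_of_real T)) (h2 ` UNIV - hd ` UNIV)"
    by (rule has_sum_Diff[OF G2 GD]) (auto simp: h2_def hd_def)
  have U: "(F has_sum (complex_of_real (S * S) + (complex_of_real (S * S) - complex_of_real T)))
            (h1 ` UNIV \<union> (h2 ` UNIV - hd ` UNIV))"
    by (rule has_sum_Un_disjoint[OF G1 G2D]) (auto simp: h1_def h2_def hd_def)
  have E: "Gamma0 A = h1 ` UNIV \<union> (h2 ` UNIV - hd ` UNIV)"
  proof (intro set_eqI iffI)
    fix x assume "x \<in> Gamma0 A"
    then obtain n1 n2 n3 n where x: "x = (n1, n2, n3, n)" and "(n1, n2, n3, n) \<in> Gamma0 A"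
      by (cases x) auto
    then have "n = n1 - n2 + n3 \<and> (n1 = n2 \<or> n3 = n2)" using Gamma0_char[OF symm adm] by blast
    then show "x \<in> h1 ` UNIV \<union> (h2 ` UNIV - hd ` UNIV)"
      unfolding x h1_def h2_def hd_def image_def by auto
  next
    fix x assume "x \<in> h1 ` UNIV \<union> (h2 ` UNIV - hd ` UNIV)"
    then obtain n1 n2 n3 n where x: "x = (n1, n2, n3, n)" and
      "n = n1 - n2 + n3 \<and> (n1 = n2 \<or> n3 = n2)"
      unfolding h1_def h2_def hd_def by auto
    then show "x \<in> Gamma0 A" using Gamma0_char[OF symm adm] by blast
  qed
  have val: "complex_of_real (S * S) + (complex_of_real (S * S) - complex_of_real T)
       = complex_of_real (2 * S\<^sup>2 - T)"
    by (simp add: power2_eq_square)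
  have "(F has_sum complex_of_real (2 * S\<^sup>2 - T)) (Gamma0 A)"
    unfolding E val[symmetric] by (rule U)
  then show ?thesis unfolding F_def S_def T_def g_def .
qed

end
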